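(* For every $A\in\mathcal{B}$ we have $\det(A)=(-t)^k$ for some integer $k$. In particular, $\overline{\rho}(\mathcal{B})=\mathrm{PSL}(2,\mathbb{Z})$.
   Context: For a matrix $A$ with Laurent polynomial entries, $\overline{A}$ denotes the matrix obtained by substituting $t\mapsto t^{-1}$ in every entry. Let $J_3=\begin{pmatrix}1&-t^{-1}&-t^{-1}\\-t&1&-t^{-1}\\-t&-t&1\end{pmatrix}$, $v=(t,t^2,t^3)$ (a row vector) and $\vec{1}=(1,1,1)^T$. The formal Burau group is $\mathcal{B}=\{A\in\mathrm{GL}(3,\mathbb{Z}[t,t^{-1}]) : vA=v,\ A\vec 1=\vec 1,\ \overline{A}J_3A^T=J_3\}$. For $A\in\mathcal{B}$, let $B=A|_{t=-1}\in\mathrm{GL}(3,\mathbb{Z})$ and $\rho(B)=\begin{pmatrix}1-B_{13}&1-B_{11}\\1-B_{33}&1-B_{31}\end{pmatrix}\in\mathrm{GL}(2,\mathbb{Z})$; $\overline{\rho}(A)$ is the image of $\rho(B)$ in $\mathrm{PGL}(2,\mathbb{Q}(t))$ (quotient by nonzero scalars), and $\mathrm{PSL}(2,\mathbb{Z})$ is identified with the image of $\mathrm{SL}(2,\mathbb{Z})$ there. *)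

theory Defs
  imports "HOL-Analysis.Analysis"
    "HOL-Computational_Algebra.Formal_Laurent_Series"
    "HOL-Computational_Algebra.Polynomial"
    "HOL-Computational_Algebra.Fraction_Field"
begin

text \<open>Laurent polynomials Z[t,t^-1] are modelled as integer formal Laurent series
  with finitely many nonzero coefficients; t is fls_X.\<close>

definition is_lpoly :: "int fls \<Rightarrow> bool" where
  "is_lpoly f \<longleftrightarrow> finite {n. fls_nth f n \<noteq> 0}"

text \<open>Substitution t to t^-1 (only meaningful on Laurent polynomials).\<close>
definition lbar :: "int fls \<Rightarrow> int fls" where
  "lbar f = (if is_lpoly f then Abs_fls (\<lambda>n. fls_nth f (- n)) else 0)"

definition eval_m1 :: "int fls \<Rightarrow> int" where
  "eval_m1 f = (\<Sum>n\<in>{n. fls_nth f n \<noteq> 0}. fls_nth f n * (-1) ^ nat \<bar>n\<bar>)"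

definition neg_t_pow :: "int \<Rightarrow> int fls" where
  "neg_t_pow k = (-1) ^ nat \<bar>k\<bar> * fls_X_intpow k"

definition is_lmat :: "int fls ^3^3 \<Rightarrow> bool" where
  "is_lmat A \<longleftrightarrow> (\<forall>i j. is_lpoly (A $ i $ j))"

definition GL3_laurent :: "(int fls ^3^3) set" where
  "GL3_laurent = {A. is_lmat A \<and> (\<exists>B. is_lmat B \<and> A ** B = mat 1 \<and> B ** A = mat 1)}"

definition mat_bar :: "int fls ^3^3 \<Rightarrow> int fls ^3^3" where
  "mat_bar A = (\<chi> i j. lbar (A $ i $ j))"

definition t_inv :: "int fls" where
  "t_inv = fls_X_intpow (-1)"

definition J3 :: "int fls ^3^3" where
  "J3 = vector [vector [1, - t_inv, - t_inv],
                vector [- fls_X, 1, - t_inv],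
                vector [- fls_X, - fls_X, 1]]"

definition v_row :: "int fls ^3" where
  "v_row = vector [fls_X, fls_X ^ 2, fls_X ^ 3]"

definition one_col :: "int fls ^3" where
  "one_col = vector [1, 1, 1]"

definition formal_Burau :: "(int fls ^3^3) set" where
  "formal_Burau = {A \<in> GL3_laurent. v_row v* A = v_row \<and> A *v one_col = one_col
                   \<and> mat_bar A ** J3 ** transpose A = J3}"

definition eval_mat_m1 :: "int fls ^3^3 \<Rightarrow> int ^3^3" where
  "eval_mat_m1 A = (\<chi> i j. eval_m1 (A $ i $ j))"

definition rho :: "int ^3^3 \<Rightarrow> int ^2^2" where
  "rho B = vector [vector [1 - B $ 1 $ 3, 1 - B $ 1 $ 1],
                   vector [1 - B $ 3 $ 3, 1 - B $ 3 $ 1]]"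

text \<open>Q(t) = fraction field of Q[t]; PGL(2,Q(t)) classes as sets of matrices modulo nonzero scalars.\<close>
type_synonym Qt = "rat poly fract"

definition int_to_Qt_mat :: "int ^2^2 \<Rightarrow> Qt ^2^2" where
  "int_to_Qt_mat M = (\<chi> i j. of_int (M $ i $ j))"

definition pgl_class :: "Qt ^2^2 \<Rightarrow> (Qt ^2^2) set" where
  "pgl_class X = {(\<chi> i j. c * X $ i $ j) | c. c \<noteq> 0}"

definition rho_bar :: "int fls ^3^3 \<Rightarrow> (Qt ^2^2) set" where
  "rho_bar A = pgl_class (int_to_Qt_mat (rho (eval_mat_m1 A)))"

definition PSL2Z :: "(Qt ^2^2) set set" where
  "PSL2Z = (\<lambda>M. pgl_class (int_to_Qt_mat M)) ` {M :: int ^2^2. det M = 1}"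

end

theory Submission
  imports Defs
begin

no_notation fps_nth (infixl \<open>$\<close> 75)

section \<open>Laurent polynomials\<close>

definition supp :: "int fls \<Rightarrow> int set" where
  "supp f = {n. fls_nth f n \<noteq> 0}"

lemma lp_iff: "is_lpoly f \<longleftrightarrow> finite (supp f)"
  by (simp add: is_lpoly_def supp_def)

definition lmono :: "int \<Rightarrow> int \<Rightarrow> int fls" where
  "lmono c n = fls_shift (-n) (fls_const c)"

lemma lmono_nth [simp]: "fls_nth (lmono c n) m = (if m = n then c else 0)"
  by (simp add: lmono_def)

lemma supp_mono: "supp (lmono c n) \<subseteq> {n}"
  by (auto simp: supp_def)

lemma lp_mono [simp]: "is_lpoly (lmono c n)"
  unfolding lp_iff by (rule finite_subset[OF supp_mono]) simp

lemma lp_add [simp]: "is_lpoly f \<Longrightarrow> is_lpoly g \<Longrightarrow> is_lpoly (f + g)"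
  unfolding lp_iff
  by (rule finite_subset[of _ "supp f \<union> supp g"]) (auto simp: supp_def)

lemma lp_uminus [simp]: "is_lpoly f \<Longrightarrow> is_lpoly (- f)"
  unfolding lp_iff by (simp add: supp_def)

lemma lp_diff [simp]: "is_lpoly f \<Longrightarrow> is_lpoly g \<Longrightarrow> is_lpoly (f - g)"
  using lp_add[of f "-g"] by simp

lemma lp_zero [simp]: "is_lpoly 0"
  by (simp add: lp_iff supp_def)

lemma lmono_zero_deg: "lmono c 0 = fls_const c"
  by (simp add: lmono_def)

lemma lp_const [simp]: "is_lpoly (fls_const c)"
  using lp_mono[of c 0] by (simp add: lmono_zero_deg)

lemma lp_one [simp]: "is_lpoly 1"
  using lp_const[of 1] by simp

lemma lmono_one: "lmono 1 n = fls_X_intpow n"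
  by (simp add: lmono_def)

lemma lp_X_intpow [simp]: "is_lpoly (fls_X_intpow n)"
  using lp_mono[of 1 n] by (simp add: lmono_one)

lemma lp_X [simp]: "is_lpoly fls_X"
  using lp_X_intpow[of 1] by (simp add: fls_X_conv_shift_1)

lemma lp_t_inv [simp]: "is_lpoly t_inv"
  using lp_X_intpow[of "-1"] by (simp add: t_inv_def)

lemma lp_sum: "finite S \<Longrightarrow> (\<And>x. x \<in> S \<Longrightarrow> is_lpoly (h x)) \<Longrightarrow> is_lpoly (\<Sum>x\<in>S. h x)"
  by (induction S rule: finite_induct) auto

lemma decomp:
  assumes "finite S" "supp f \<subseteq> S"
  shows "f = (\<Sum>n\<in>S. lmono (fls_nth f n) n)"
proof (rule fls_eqI)
  fix m
  have "fls_nth (\<Sum>n\<in>S. lmono (fls_nth f n) n) m = (\<Sum>n\<in>S. if m = n then fls_nth f n else 0)"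
    by (simp add: fls_nth_sum)
  also have "\<dots> = (if m \<in> S then fls_nth f m else 0)"
    using assms(1) by (simp add: sum.delta)
  also have "\<dots> = fls_nth f m" using assms(2) by (auto simp: supp_def)
  finally show "fls_nth f m = fls_nth (\<Sum>n\<in>S. lmono (fls_nth f n) n) m" by simp
qed

lemma lmono_mult: "lmono a i * lmono b j = lmono (a * b) (i + j)"
  by (simp add: lmono_def fls_times_both_shifted_simp)

lemma lp_mult [simp]:
  assumes "is_lpoly f" "is_lpoly g"
  shows "is_lpoly (f * g)"
proof -
  have fs: "finite (supp f)" "finite (supp g)" using assms by (auto simp: lp_iff)
  have "f * g = (\<Sum>i\<in>supp f. lmono (fls_nth f i) i) * (\<Sum>j\<in>supp g. lmono (fls_nth g j) j)"
    using decomp[OF fs(1) order_refl] decomp[OF fs(2) order_refl] by simp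
  also have "\<dots> = (\<Sum>i\<in>supp f. \<Sum>j\<in>supp g. lmono (fls_nth f i) i * lmono (fls_nth g j) j)"
    by (simp add: sum_product)
  finally show ?thesis using fs by (auto intro!: lp_sum simp: lmono_mult)
qed

lemma lp_power [simp]: "is_lpoly f \<Longrightarrow> is_lpoly (f ^ n)"
  by (induction n) auto

lemma lp_numeral [simp]: "is_lpoly (numeral k)"
proof -
  have "(numeral k :: int fls) = of_int (numeral k)" by simp
  also have "\<dots> = fls_const (numeral k)" by (simp only: fls_of_int) simp
  finally have "(numeral k :: int fls) = fls_const (numeral k)" .
  thus ?thesis by (metis lp_const)
qed

lemma L_sum:
  fixes L :: "int fls \<Rightarrow> 'b::comm_ring_1"
  assumes add: "\<And>f g. is_lpoly f \<Longrightarrow> is_lpoly g \<Longrightarrow> L (f + g) = L f + L g"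
    and zero: "L 0 = 0"
  shows "finite S \<Longrightarrow> (\<And>x. x \<in> S \<Longrightarrow> is_lpoly (h x)) \<Longrightarrow> L (\<Sum>x\<in>S. h x) = (\<Sum>x\<in>S. L (h x))"
proof (induction S rule: finite_induct)
  case empty
  then show ?case by (simp add: zero)
next
  case (insert x F)
  then show ?case by (simp add: add lp_sum)
qed

lemma hom_mult:
  fixes L :: "int fls \<Rightarrow> 'b::comm_ring_1" and \<phi> :: "int \<Rightarrow> 'b"
  assumes add: "\<And>f g. is_lpoly f \<Longrightarrow> is_lpoly g \<Longrightarrow> L (f + g) = L f + L g"
    and zero: "L 0 = 0"
    and mo: "\<And>c n. L (lmono c n) = of_int c * \<phi> n"
    and phi: "\<And>i j. \<phi> (i + j) = \<phi> i * \<phi> j"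
    and lf: "is_lpoly f" and lg: "is_lpoly g"
  shows "L (f * g) = L f * L g"
proof -
  note LS = L_sum[of L, OF add zero]
  have fs: "finite (supp f)" "finite (supp g)" using lf lg by (auto simp: lp_iff)
  have "f * g = (\<Sum>i\<in>supp f. lmono (fls_nth f i) i) * (\<Sum>j\<in>supp g. lmono (fls_nth g j) j)"
    using decomp[OF fs(1) order_refl] decomp[OF fs(2) order_refl] by simp
  also have "\<dots> = (\<Sum>i\<in>supp f. \<Sum>j\<in>supp g. lmono (fls_nth f i * fls_nth g j) (i + j))"
    by (simp add: sum_product lmono_mult)
  finally have e: "f * g = \<dots>" .
  have "L (f * g) = (\<Sum>i\<in>supp f. \<Sum>j\<in>supp g. L (lmono (fls_nth f i * fls_nth g j) (i + j)))"
    unfolding e using fs by (simp add: LS lp_sum)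
  also have "\<dots> = (\<Sum>i\<in>supp f. \<Sum>j\<in>supp g. (of_int (fls_nth f i) * \<phi> i) * (of_int (fls_nth g j) * \<phi> j))"
    by (simp add: mo phi mult_ac)
  also have "\<dots> = (\<Sum>i\<in>supp f. of_int (fls_nth f i) * \<phi> i) * (\<Sum>j\<in>supp g. of_int (fls_nth g j) * \<phi> j)"
    by (simp add: sum_product)
  also have "(\<Sum>i\<in>supp f. of_int (fls_nth f i) * \<phi> i) = L f"
    using fs by (subst (2) decomp[OF fs(1) order_refl]) (simp add: LS mo)
  also have "(\<Sum>j\<in>supp g. of_int (fls_nth g j) * \<phi> j) = L g"
    using fs by (subst (2) decomp[OF fs(2) order_refl]) (simp add: LS mo)
  finally show ?thesis .
qed


section \<open>Evaluation at -1\<close>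

definition sg :: "int \<Rightarrow> int" where "sg n = (-1) ^ nat \<bar>n\<bar>"

lemma sg_alt: "sg n = (if even n then 1 else -1)"
  by (simp add: sg_def minus_one_power_iff even_nat_iff)

lemma sg_add: "sg (i + j) = sg i * sg j"
  by (auto simp: sg_alt)

lemma sg_uminus: "sg (- n) = sg n"
  by (simp add: sg_def)

lemma eval_T:
  assumes "finite T" "supp f \<subseteq> T"
  shows "eval_m1 f = (\<Sum>n\<in>T. fls_nth f n * sg n)"
proof -
  have "eval_m1 f = (\<Sum>n\<in>supp f. fls_nth f n * sg n)"
    by (simp add: eval_m1_def supp_def sg_def)
  also have "\<dots> = (\<Sum>n\<in>T. fls_nth f n * sg n)"
    using assms by (intro sum.mono_neutral_left) (auto simp: supp_def)
  finally show ?thesis .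
qed

lemma eval_add [simp]:
  assumes "is_lpoly f" "is_lpoly g"
  shows "eval_m1 (f + g) = eval_m1 f + eval_m1 g"
proof -
  let ?T = "supp f \<union> supp g"
  have T: "finite ?T" using assms by (simp add: lp_iff)
  have "eval_m1 (f + g) = (\<Sum>n\<in>?T. fls_nth (f + g) n * sg n)"
    using T by (rule eval_T) (auto simp: supp_def)
  also have "\<dots> = (\<Sum>n\<in>?T. fls_nth f n * sg n) + (\<Sum>n\<in>?T. fls_nth g n * sg n)"
    by (simp add: sum.distrib distrib_right)
  also have "\<dots> = eval_m1 f + eval_m1 g"
    using T by (simp add: eval_T[symmetric])
  finally show ?thesis .
qed

lemma eval_zero [simp]: "eval_m1 0 = 0"
  by (simp add: eval_m1_def)

lemma eval_mono [simp]: "eval_m1 (lmono c n) = c * sg n"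
  by (subst eval_T[of "{n}"]) (use supp_mono in auto)

lemma eval_mult [simp]:
  assumes "is_lpoly f" "is_lpoly g"
  shows "eval_m1 (f * g) = eval_m1 f * eval_m1 g"
  by (rule hom_mult[where \<phi> = sg]) (use assms sg_add in auto)

lemma eval_uminus [simp]:
  assumes "is_lpoly f"
  shows "eval_m1 (- f) = - eval_m1 f"
proof -
  have "eval_m1 f + eval_m1 (- f) = eval_m1 (f + - f)" using assms by (simp only: eval_add lp_uminus)
  also have "\<dots> = 0" by simp
  finally show ?thesis by simp
qed

lemma eval_diff [simp]:
  assumes "is_lpoly f" "is_lpoly g"
  shows "eval_m1 (f - g) = eval_m1 f - eval_m1 g"
  using eval_add[of f "-g"] assms by simp

lemma eval_const [simp]: "eval_m1 (fls_const c) = c"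
  using eval_mono[of c 0] by (simp add: lmono_zero_deg sg_def)

lemma eval_one [simp]: "eval_m1 1 = 1"
  using eval_const[of 1] by simp

lemma eval_X_intpow [simp]: "eval_m1 (fls_X_intpow n) = sg n"
  using eval_mono[of 1 n] by (simp add: lmono_one)

lemma eval_X [simp]: "eval_m1 fls_X = -1"
  using eval_X_intpow[of 1] by (simp add: fls_X_conv_shift_1 sg_def)

lemma eval_t_inv [simp]: "eval_m1 t_inv = -1"
  using eval_X_intpow[of "-1"] by (simp add: t_inv_def sg_def)

lemma eval_sum:
  "finite S \<Longrightarrow> (\<And>x. x \<in> S \<Longrightarrow> is_lpoly (h x)) \<Longrightarrow> eval_m1 (\<Sum>x\<in>S. h x) = (\<Sum>x\<in>S. eval_m1 (h x))"
  by (rule L_sum) auto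

section \<open>Bar involution\<close>

lemma uminus_img: "(x::int) \<in> uminus ` S \<longleftrightarrow> - x \<in> S"
  by (auto intro: image_eqI[of _ _ "- x"])

lemma lbar_nth:
  assumes "is_lpoly f"
  shows "fls_nth (lbar f) n = fls_nth f (- n)"
proof -
  have fin: "finite (supp f)" using assms by (simp add: lp_iff)
  have "{k::nat. fls_nth f (- (- int k)) \<noteq> 0} = int -` supp f" by (auto simp: supp_def)
  hence "finite {k::nat. fls_nth f (- (- int k)) \<noteq> 0}"
    using finite_vimageI[OF fin, of int] by (simp add: inj_def)
  thus ?thesis using assms unfolding lbar_def
    by (simp add: nth_Abs_fls_finite_nonzero_neg_nth)
qed

lemma lp_lbar [simp]:
  assumes "is_lpoly f" shows "is_lpoly (lbar f)"
proof -
  have "supp (lbar f) \<subseteq> uminus ` supp f"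
    using assms by (auto simp: supp_def lbar_nth uminus_img)
  thus ?thesis using assms unfolding lp_iff by (meson finite_imageI finite_subset)
qed

lemma lbar_add [simp]:
  assumes "is_lpoly f" "is_lpoly g"
  shows "lbar (f + g) = lbar f + lbar g"
  by (rule fls_eqI) (simp add: assms lbar_nth)

lemma lbar_zero [simp]: "lbar 0 = 0"
  by (rule fls_eqI) (simp add: lbar_nth)

lemma lbar_mono [simp]: "lbar (lmono c n) = lmono c (- n)"
  by (rule fls_eqI) (auto simp: lbar_nth)

lemma of_int_fls: "(of_int c :: int fls) = lmono c 0"
  by (simp add: lmono_zero_deg fls_of_int)

lemma lbar_mult [simp]:
  assumes "is_lpoly f" "is_lpoly g"
  shows "lbar (f * g) = lbar f * lbar g"
  by (rule hom_mult[where \<phi> = "\<lambda>n. lmono 1 (- n)"])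
     (use assms in \<open>auto simp: of_int_fls lmono_mult\<close>)

lemma lbar_uminus [simp]:
  assumes "is_lpoly f"
  shows "lbar (- f) = - lbar f"
  by (rule fls_eqI) (simp add: assms lbar_nth)

lemma lbar_diff [simp]:
  assumes "is_lpoly f" "is_lpoly g"
  shows "lbar (f - g) = lbar f - lbar g"
  by (rule fls_eqI) (simp add: assms lbar_nth)

lemma lbar_const [simp]: "lbar (fls_const c) = fls_const c"
  using lbar_mono[of c 0] by (simp add: lmono_zero_deg)

lemma lbar_one [simp]: "lbar 1 = 1"
  using lbar_const[of 1] by simp

lemma lbar_X [simp]: "lbar fls_X = t_inv"
  using lbar_mono[of 1 1] by (simp add: lmono_one fls_X_conv_shift_1 t_inv_def)

lemma lbar_t_inv [simp]: "lbar t_inv = fls_X"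
  using lbar_mono[of 1 "-1"] by (simp add: lmono_one fls_X_conv_shift_1 t_inv_def)

lemma eval_lbar [simp]:
  assumes "is_lpoly f"
  shows "eval_m1 (lbar f) = eval_m1 f"
proof -
  have fin: "finite (supp f)" using assms by (simp add: lp_iff)
  have "eval_m1 (lbar f) = (\<Sum>n\<in>uminus ` supp f. fls_nth (lbar f) n * sg n)"
    using fin assms by (intro eval_T) (auto simp: supp_def lbar_nth uminus_img)
  also have "\<dots> = (\<Sum>n\<in>supp f. fls_nth f n * sg n)"
    by (subst sum.reindex) (auto simp: inj_on_def assms lbar_nth sg_uminus)
  also have "\<dots> = eval_m1 f" using fin by (simp add: eval_T)
  finally show ?thesis .
qed

lemma X_t_inv: "fls_X * t_inv = 1"
  by (simp add: t_inv_def fls_X_conv_shift_1 fls_times_both_shifted_simp)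


section \<open>Units of the Laurent polynomial ring\<close>

lemma subdeg_bound:
  assumes "is_lpoly h" "fls_nth h n \<noteq> 0"
  shows "fls_subdegree h \<le> n \<and> n \<le> - fls_subdegree (lbar h)"
proof -
  have "fls_nth (lbar h) (- n) \<noteq> 0" using assms by (simp add: lbar_nth)
  hence "fls_subdegree (lbar h) \<le> - n" by (rule fls_subdegree_leI)
  thus ?thesis using assms(2) fls_subdegree_leI by force
qed

lemma lp_unit:
  assumes lf: "is_lpoly f" and lg: "is_lpoly g" and fg: "f * g = 1"
  shows "\<exists>k c. f = lmono c k \<and> (c = 1 \<or> c = -1)"
proof -
  have f0: "f \<noteq> 0" and g0: "g \<noteq> 0" using fg by auto
  have bfg: "lbar f * lbar g = 1" using fg lf lg by (metis lbar_mult lbar_one)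
  have bf0: "lbar f \<noteq> 0" and bg0: "lbar g \<noteq> 0" using bfg by auto
  have s1: "fls_subdegree f + fls_subdegree g = 0"
    using fls_subdegree_mult[OF f0 g0] fg by simp
  have s2: "fls_subdegree (lbar f) + fls_subdegree (lbar g) = 0"
    using fls_subdegree_mult[OF bf0 bg0] bfg by simp
  have bf: "fls_subdegree f \<le> - fls_subdegree (lbar f)"
    using subdeg_bound[OF lf nth_fls_subdegree_nonzero[OF f0]] by simp
  have bg: "fls_subdegree g \<le> - fls_subdegree (lbar g)"
    using subdeg_bound[OF lg nth_fls_subdegree_nonzero[OF g0]] by simp
  define L where "L = fls_subdegree f"
  have eqL: "fls_subdegree f = - fls_subdegree (lbar f)" using s1 s2 bf bg by linarith
  have sub: "supp f \<subseteq> {L}"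
  proof
    fix n assume "n \<in> supp f"
    hence "fls_nth f n \<noteq> 0" by (simp add: supp_def)
    from subdeg_bound[OF lf this] eqL show "n \<in> {L}" by (simp add: L_def)
  qed
  define c where "c = fls_nth f L"
  have fe: "f = lmono c L" using decomp[OF _ sub] by (simp add: c_def)
  have "eval_m1 f * eval_m1 g = 1" using fg lf lg by (metis eval_mult eval_one)
  hence "c * (sg L * eval_m1 g) = 1" using fe by (simp add: mult_ac)
  hence "c = 1 \<or> c = -1" by (rule pos_zmult_eq_1_iff_lemma)
  thus ?thesis using fe by blast
qed


lemma one_plus_X_nz: "(1 + fls_X :: int fls) \<noteq> 0"
proof
  assume "(1 + fls_X :: int fls) = 0"
  hence "fls_nth (1 + fls_X :: int fls) 0 = 0" by simp
  thus False by simp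
qed

lemma t_inv_nz: "t_inv \<noteq> 0"
  by (simp add: t_inv_def fls_shift_eq0_iff)

lemma key:
  fixes p a :: "int fls ^ 3"
  assumes lp: "\<And>k. is_lpoly (p $ k)" "\<And>k. is_lpoly (a $ k)"
    and rb: "p$1 + p$2 + p$3 = 1" and ra: "a$1 + a$2 + a$3 = 1"
    and E: "(\<Sum>l\<in>UNIV. (\<Sum>k\<in>UNIV. lbar (p$k) * J3$k$l) * a$l) = - t_inv"
  shows "eval_m1 (p$1) * eval_m1 (a$2) + eval_m1 (p$1) * eval_m1 (a$3)
         - eval_m1 (p$2) * eval_m1 (a$1) + eval_m1 (p$2) * eval_m1 (a$3)
         - eval_m1 (p$3) * eval_m1 (a$1) - eval_m1 (p$3) * eval_m1 (a$2) = 1"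
proof -
  define t where "t = (fls_X :: int fls)"
  define s where "s = t_inv"
  define b1 where "b1 = lbar (p$1)"
  define b2 where "b2 = lbar (p$2)"
  define b3 where "b3 = lbar (p$3)"
  define a1 where "a1 = a$1"
  define a2 where "a2 = a$2"
  define a3 where "a3 = a$3"
  have ts: "t * s = 1" by (simp add: t_def s_def X_t_inv)
  have rb': "b1 + b2 + b3 = 1"
  proof -
    have "lbar (p$1 + p$2 + p$3) = 1" using rb by simp
    thus ?thesis using lp by (simp add: b1_def b2_def b3_def)
  qed
  have E': "b1 * a1 + b2 * (- t) * a1 + b3 * (- t) * a1
          + (b1 * (- s) * a2 + b2 * a2 + b3 * (- t) * a2)
          + (b1 * (- s) * a3 + b2 * (- s) * a3 + b3 * a3) = - s"
    using E by (simp add: sum_3 J3_def t_def s_def b1_def b2_def b3_def a1_def a2_def a3_def algebra_simps)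
  define X where "X = b1 * a1 + b2 * a2 + b3 * a3"
  define Y where "Y = b1 * a2 + b1 * a3 - b2 * a1 + b2 * a3 - b3 * a1 - b3 * a2"
  have "s * (1 + t) * ((1 + t) * X + (t - 1) * (Y - 1)) = 0"
    using E' rb' ra ts unfolding X_def Y_def a1_def[symmetric] a2_def[symmetric] a3_def[symmetric]
    by algebra
  hence Z: "(1 + t) * X + (t - 1) * (Y - 1) = 0"
    using one_plus_X_nz t_inv_nz by (simp add: t_def s_def)
  have lps: "is_lpoly b1" "is_lpoly b2" "is_lpoly b3" "is_lpoly a1" "is_lpoly a2" "is_lpoly a3"
    using lp by (simp_all add: b1_def b2_def b3_def a1_def a2_def a3_def)
  have "eval_m1 ((1 + t) * X + (t - 1) * (Y - 1)) = 0" using Z by simp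
  hence "-2 * (eval_m1 Y - 1) = 0"
    using lps by (simp add: t_def X_def Y_def)
  hence "eval_m1 Y = 1" by simp
  thus ?thesis using lps lp
    by (simp add: Y_def b1_def b2_def b3_def a1_def a2_def a3_def)
qed


lemma det_one_alg:
  fixes b11 b12 b13 b21 b22 b23 b31 b32 b33 :: int
  assumes "- b11 + b21 - b31 = -1" "- b12 + b22 - b32 = 1" "- b13 + b23 - b33 = -1"
    "b11*b22 + b11*b23 - b12*b21 + b12*b23 - b13*b21 - b13*b22 = 1"
    "b11*b32 + b11*b33 - b12*b31 + b12*b33 - b13*b31 - b13*b32 = 1"
    "b21*b32 + b21*b33 - b22*b31 + b22*b33 - b23*b31 - b23*b32 = 1"
  shows "b11*b22*b33 + b12*b23*b31 + b13*b21*b32 - b11*b23*b32 - b12*b21*b33 - b13*b22*b31 = 1"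
  using assms by algebra


lemma lmat_entry [simp]: "is_lmat (A::int fls^3^3) \<Longrightarrow> is_lpoly (A $ i $ j)"
  by (simp add: is_lmat_def)

lemma eval_power [simp]: "is_lpoly f \<Longrightarrow> eval_m1 (f ^ n) = eval_m1 f ^ n"
  by (induction n) auto

lemma eval_mat_nth [simp]: "eval_mat_m1 A $ i $ j = eval_m1 (A $ i $ j)"
  by (simp add: eval_mat_m1_def)

lemma mat_bar_nth [simp]: "mat_bar A $ i $ j = lbar (A $ i $ j)"
  by (simp add: mat_bar_def)

lemma lp_det [simp]: "is_lmat A \<Longrightarrow> is_lpoly (det A)"
  by (simp add: det_3)

lemma eval_det: "is_lmat A \<Longrightarrow> eval_m1 (det A) = det (eval_mat_m1 A)"
  by (simp add: det_3)

lemma one_col_nth [simp]: "one_col $ i = 1"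
  using exhaust_3[of i] by (auto simp: one_col_def)

lemma FB_lmat: "A \<in> formal_Burau \<Longrightarrow> is_lmat A"
  by (simp add: formal_Burau_def GL3_laurent_def)

lemma FB_rows:
  fixes A :: "int fls^3^3"
  assumes "A \<in> formal_Burau"
  shows "A$i$1 + A$i$2 + A$i$3 = 1"
proof -
  have "A *v one_col = one_col" using assms by (simp add: formal_Burau_def)
  hence "(A *v one_col) $ i = one_col $ i" by simp
  thus ?thesis by (simp add: matrix_vector_mult_def sum_3)
qed

lemma FB_v:
  fixes A :: "int fls^3^3"
  assumes "A \<in> formal_Burau"
  shows "A$1$j * fls_X + A$2$j * fls_X^2 + A$3$j * fls_X^3 = v_row $ j"
proof -
  have "v_row v* A = v_row" using assms by (simp add: formal_Burau_def)
  hence "(v_row v* A) $ j = v_row $ j" by simp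
  thus ?thesis by (simp add: vector_matrix_mult_def sum_3 v_row_def mult.commute)
qed

lemma FB_J:
  fixes A :: "int fls^3^3"
  assumes "A \<in> formal_Burau"
  shows "(\<Sum>l\<in>UNIV. (\<Sum>k\<in>UNIV. lbar (A$i$k) * J3$k$l) * A$j$l) = J3$i$j"
proof -
  have "mat_bar A ** J3 ** transpose A = J3" using assms by (simp add: formal_Burau_def)
  hence "(mat_bar A ** J3 ** transpose A) $ i $ j = J3 $ i $ j" by simp
  thus ?thesis by (simp add: matrix_matrix_mult_def transpose_def)
qed

lemma FB_evalB:
  fixes A :: "int fls^3^3"
  assumes "A \<in> formal_Burau"
  defines "B \<equiv> eval_mat_m1 A"
  shows "(B::int^3^3)$i$1 + B$i$2 + B$i$3 = 1"
    and "- ((B::int^3^3)$1$1) + B$2$1 - B$3$1 = -1" "- ((B::int^3^3)$1$2) + B$2$2 - B$3$2 = 1"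
      "- ((B::int^3^3)$1$3) + B$2$3 - B$3$3 = -1"
proof -
  have L: "is_lmat A" using assms FB_lmat by blast
  have "eval_m1 (A$i$1 + A$i$2 + A$i$3) = 1" using FB_rows[OF assms(1)] by simp
  thus "B$i$1 + B$i$2 + B$i$3 = 1" using L by (simp add: B_def)
  have "eval_m1 (A$1$1 * fls_X + A$2$1 * fls_X^2 + A$3$1 * fls_X^3) = eval_m1 (v_row $ 1)"
    using FB_v[OF assms(1)] by simp
  thus "- (B$1$1) + B$2$1 - B$3$1 = -1" using L by (simp add: B_def v_row_def)
  have "eval_m1 (A$1$2 * fls_X + A$2$2 * fls_X^2 + A$3$2 * fls_X^3) = eval_m1 (v_row $ 2)"
    using FB_v[OF assms(1)] by simp
  thus "- (B$1$2) + B$2$2 - B$3$2 = 1" using L by (simp add: B_def v_row_def)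
  have "eval_m1 (A$1$3 * fls_X + A$2$3 * fls_X^2 + A$3$3 * fls_X^3) = eval_m1 (v_row $ 3)"
    using FB_v[OF assms(1)] by simp
  thus "- (B$1$3) + B$2$3 - B$3$3 = -1" using L by (simp add: B_def v_row_def)
qed

lemma FB_K:
  fixes A :: "int fls^3^3"
  assumes "A \<in> formal_Burau" and ij: "(i = 1 \<and> j = 2) \<or> (i = 1 \<and> j = 3) \<or> (i = 2 \<and> j = (3::3))"
  defines "B \<equiv> eval_mat_m1 A"
  shows "(B::int^3^3)$i$1 * B$j$2 + B$i$1 * B$j$3 - B$i$2 * B$j$1 + B$i$2 * B$j$3 - B$i$3 * B$j$1 - B$i$3 * B$j$2 = 1"
proof -
  have L: "is_lmat A" using assms FB_lmat by blast
  have J: "J3 $ i $ j = - t_inv" using ij by (auto simp: J3_def)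
  show ?thesis unfolding B_def eval_mat_nth
  proof (rule key[of "A$i" "A$j"])
    show "\<And>k. is_lpoly (A$i$k)" "\<And>k. is_lpoly (A$j$k)" using L by simp_all
    show "A$i$1 + A$i$2 + A$i$3 = 1" "A$j$1 + A$j$2 + A$j$3 = 1" by (rule FB_rows[OF assms(1)])+
    show "(\<Sum>l\<in>UNIV. (\<Sum>k\<in>UNIV. lbar (A$i$k) * J3$k$l) * A$j$l) = - t_inv"
      using FB_J[OF assms(1), of i j] J by simp
  qed
qed

lemma FB_detB:
  fixes A :: "int fls^3^3"
  assumes "A \<in> formal_Burau"
  shows "det (eval_mat_m1 A) = 1"
  unfolding det_3
  by (rule det_one_alg[OF FB_evalB(2-4)[OF assms]
        FB_K[OF assms disjI1[OF conjI[OF refl refl]]]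
        FB_K[OF assms disjI2[OF disjI1[OF conjI[OF refl refl]]]]
        FB_K[OF assms disjI2[OF disjI2[OF conjI[OF refl refl]]]]])

lemma part1:
  fixes A :: "int fls^3^3"
  assumes "A \<in> formal_Burau"
  shows "\<exists>k::int. det A = neg_t_pow k"
proof -
  have L: "is_lmat A" using assms FB_lmat by blast
  obtain Bi where Bi: "is_lmat Bi" "A ** Bi = mat 1"
    using assms by (auto simp: formal_Burau_def GL3_laurent_def)
  have "det A * det Bi = 1" using Bi by (metis det_I det_mul)
  then obtain k c where dk: "det A = lmono c k" and c: "c = 1 \<or> c = -1"
    using lp_unit[of "det A" "det Bi"] L Bi by auto
  have "eval_m1 (det A) = 1" using eval_det[OF L] FB_detB[OF assms] by simp
  hence "c * sg k = 1" using dk by simp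
  hence "c = sg k" using c by (auto simp: sg_alt split: if_splits)
  have "neg_t_pow k = of_int (sg k) * lmono 1 k"
    by (simp add: neg_t_pow_def sg_def lmono_one)
  also have "\<dots> = lmono (sg k) k" by (simp add: of_int_fls lmono_mult)
  finally have "det A = neg_t_pow k" using dk \<open>c = sg k\<close> by simp
  thus ?thesis by blast
qed


section \<open>Closure of the formal Burau group and generators\<close>

lemma t_inv_X: "t_inv * fls_X = 1"
  using X_t_inv by (simp add: mult.commute)

lemma X_t_inv_assoc: "fls_X * (t_inv * f) = f" "t_inv * (fls_X * f) = f"
  by (simp_all add: mult.assoc[symmetric] X_t_inv t_inv_X)

lemmas Xt_simps = X_t_inv t_inv_X X_t_inv_assoc

lemma lmat_mult [simp]: "is_lmat A \<Longrightarrow> is_lmat B \<Longrightarrow> is_lmat (A ** B)"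
  by (simp add: is_lmat_def matrix_matrix_mult_def sum_3)

lemma mat_bar_mult:
  "is_lmat A \<Longrightarrow> is_lmat B \<Longrightarrow> mat_bar (A ** B) = mat_bar A ** mat_bar B"
  by (simp add: vec_eq_iff matrix_matrix_mult_def sum_3)

lemma FB_mult:
  assumes A: "A \<in> formal_Burau" and g: "g \<in> formal_Burau"
  shows "A ** g \<in> formal_Burau"
proof -
  obtain Ai where Ai: "is_lmat Ai" "A ** Ai = mat 1" "Ai ** A = mat 1"
    using A by (auto simp: formal_Burau_def GL3_laurent_def)
  obtain gi where gi: "is_lmat gi" "g ** gi = mat 1" "gi ** g = mat 1"
    using g by (auto simp: formal_Burau_def GL3_laurent_def)
  have LA: "is_lmat A" and Lg: "is_lmat g" using A g by (simp_all add: FB_lmat)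
  have "(A ** g) ** (gi ** Ai) = A ** (g ** gi) ** Ai" by (simp add: matrix_mul_assoc)
  hence i1: "(A ** g) ** (gi ** Ai) = mat 1" using gi Ai by (simp add: matrix_mul_rid)
  have "(gi ** Ai) ** (A ** g) = gi ** (Ai ** A) ** g" by (simp add: matrix_mul_assoc)
  hence i2: "(gi ** Ai) ** (A ** g) = mat 1" using gi Ai by (simp add: matrix_mul_rid)
  have v: "v_row v* (A ** g) = v_row"
    using A g by (simp add: formal_Burau_def vector_matrix_mul_assoc[symmetric])
  have o: "(A ** g) *v one_col = one_col"
    using A g by (simp add: formal_Burau_def matrix_vector_mul_assoc[symmetric])
  have "mat_bar (A ** g) ** J3 ** transpose (A ** g)
        = mat_bar A ** (mat_bar g ** J3 ** transpose g) ** transpose A"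
    using LA Lg by (simp add: mat_bar_mult matrix_transpose_mul matrix_mul_assoc)
  also have "\<dots> = J3" using A g by (simp add: formal_Burau_def)
  finally show ?thesis using i1 i2 v o LA Lg Ai gi
    by (auto simp: formal_Burau_def GL3_laurent_def intro!: exI[of _ "gi ** Ai"])
qed

definition s1 :: "int fls^3^3" where
  "s1 = vector [vector [1 - fls_X, fls_X, 0], vector [1, 0, 0], vector [0, 0, 1]]"
definition s2 :: "int fls^3^3" where
  "s2 = vector [vector [1, 0, 0], vector [0, 1 - fls_X, fls_X], vector [0, 1, 0]]"
definition s1i :: "int fls^3^3" where
  "s1i = vector [vector [0, 1, 0], vector [t_inv, 1 - t_inv, 0], vector [0, 0, 1]]"
definition s2i :: "int fls^3^3" where
  "s2i = vector [vector [1, 0, 0], vector [0, 0, 1], vector [0, t_inv, 1 - t_inv]]"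

lemmas mat_simps = vec_eq_iff forall_3 matrix_matrix_mult_def sum_3 mat_def
  transpose_def matrix_vector_mult_def vector_matrix_mult_def

lemma lmat_gens: "is_lmat s1" "is_lmat s2" "is_lmat s1i" "is_lmat s2i"
  by (simp_all add: is_lmat_def forall_3 s1_def s2_def s1i_def s2i_def)

lemma inv_gens: "s1 ** s1i = mat 1" "s1i ** s1 = mat 1" "s2 ** s2i = mat 1" "s2i ** s2 = mat 1"
  by (simp_all add: mat_simps s1_def s2_def s1i_def s2i_def algebra_simps X_t_inv t_inv_X)

lemma v_gens: "v_row v* s1 = v_row" "v_row v* s2 = v_row" "v_row v* s1i = v_row" "v_row v* s2i = v_row"
  apply (simp_all add: mat_simps s1_def s2_def s1i_def s2i_def v_row_def)
  by (simp_all add: algebra_simps Xt_simps power2_eq_square power3_eq_cube)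

lemma o_gens: "s1 *v one_col = one_col" "s2 *v one_col = one_col" "s1i *v one_col = one_col" "s2i *v one_col = one_col"
  by (simp_all add: mat_simps s1_def s2_def s1i_def s2i_def)

lemma J_gens: "mat_bar s1 ** J3 ** transpose s1 = J3" "mat_bar s2 ** J3 ** transpose s2 = J3"
  "mat_bar s1i ** J3 ** transpose s1i = J3" "mat_bar s2i ** J3 ** transpose s2i = J3"
  apply (simp_all add: mat_simps s1_def s2_def s1i_def s2i_def J3_def mat_bar_def)
  by (simp_all add: algebra_simps Xt_simps power2_eq_square power3_eq_cube)


lemma FB_gens: "s1 \<in> formal_Burau" "s2 \<in> formal_Burau" "s1i \<in> formal_Burau" "s2i \<in> formal_Burau"
  using lmat_gens inv_gens v_gens o_gens J_gens
  by (auto simp: formal_Burau_def GL3_laurent_def)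

lemma FB_one: "mat 1 \<in> formal_Burau"
proof -
  have L: "is_lmat (mat 1)" by (simp add: is_lmat_def mat_def)
  have "v_row v* mat 1 = v_row" by (simp add: mat_simps v_row_def)
  moreover have "mat 1 *v one_col = one_col" by (simp add: mat_simps)
  moreover have "mat_bar (mat 1) ** J3 ** transpose (mat 1) = J3"
    by (simp add: mat_simps mat_bar_def J3_def)
  ultimately show ?thesis using L
    by (auto simp: formal_Burau_def GL3_laurent_def intro!: exI[of _ "mat 1"])
qed

lemma eval_mat_mult:
  "is_lmat A \<Longrightarrow> is_lmat B \<Longrightarrow> eval_mat_m1 (A ** B) = eval_mat_m1 A ** eval_mat_m1 B"
  by (simp add: vec_eq_iff matrix_matrix_mult_def sum_3)

definition mk :: "int \<Rightarrow> int \<Rightarrow> int \<Rightarrow> int \<Rightarrow> int^2^2" where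
  "mk a b c d = vector [vector [a, b], vector [c, d]]"

lemma mk_eq: "mk a b c d = mk a' b' c' d' \<longleftrightarrow> a = a' \<and> b = b' \<and> c = c' \<and> d = d'"
  by (auto simp: mk_def vec_eq_iff forall_2)

lemma rho_mk: "rho B = mk (1 - B$1$3) (1 - B$1$1) (1 - B$3$3) (1 - B$3$1)"
  by (simp add: rho_def mk_def)

lemma rho_step:
  fixes A :: "int fls^3^3"
  assumes A: "A \<in> formal_Burau" and r: "rho (eval_mat_m1 A) = mk a b c d"
  shows "rho (eval_mat_m1 (A ** s1)) = mk a (b - a) c (d - c)"
    and "rho (eval_mat_m1 (A ** s1i)) = mk a (b + a) c (d + c)"
    and "rho (eval_mat_m1 (A ** s2)) = mk (a + b) b (c + d) d"
    and "rho (eval_mat_m1 (A ** s2i)) = mk (a - b) b (c - d) d"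
proof -
  have L: "is_lmat A" using A by (rule FB_lmat)
  have h0: "1 - eval_m1 (A$1$3) = a \<and> 1 - eval_m1 (A$1$1) = b \<and> 1 - eval_m1 (A$3$3) = c \<and> 1 - eval_m1 (A$3$1) = d"
    using r by (simp add: rho_mk mk_eq)
  have r1: "eval_m1 (A$1$1) + eval_m1 (A$1$2) + eval_m1 (A$1$3) = 1"
    using FB_evalB(1)[OF A, of 1] by simp
  have r3: "eval_m1 (A$3$1) + eval_m1 (A$3$2) + eval_m1 (A$3$3) = 1"
    using FB_evalB(1)[OF A, of 3] by simp
  have h: "eval_m1 (A$1$3) = 1 - a" "eval_m1 (A$1$1) = 1 - b" "eval_m1 (A$3$3) = 1 - c"
    "eval_m1 (A$3$1) = 1 - d" "eval_m1 (A$1$2) = a + b - 1" "eval_m1 (A$3$2) = c + d - 1"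
    using h0 r1 r3 by linarith+
  show "rho (eval_mat_m1 (A ** s1)) = mk a (b - a) c (d - c)"
    using L h by (simp add: rho_mk mk_eq matrix_matrix_mult_def sum_3 s1_def algebra_simps)
  show "rho (eval_mat_m1 (A ** s1i)) = mk a (b + a) c (d + c)"
    using L h by (simp add: rho_mk mk_eq matrix_matrix_mult_def sum_3 s1i_def algebra_simps)
  show "rho (eval_mat_m1 (A ** s2)) = mk (a + b) b (c + d) d"
    using L h by (simp add: rho_mk mk_eq matrix_matrix_mult_def sum_3 s2_def algebra_simps)
  show "rho (eval_mat_m1 (A ** s2i)) = mk (a - b) b (c - d) d"
    using L h by (simp add: rho_mk mk_eq matrix_matrix_mult_def sum_3 s2i_def algebra_simps)
qed


section \<open>Generation of SL(2,Z)\<close>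

definition Qp :: "int \<Rightarrow> int \<Rightarrow> int \<Rightarrow> int \<Rightarrow> bool" where
  "Qp a b c d \<longleftrightarrow> (\<exists>A\<in>formal_Burau. rho (eval_mat_m1 A) = mk a b c d
                      \<or> rho (eval_mat_m1 A) = mk (-a) (-b) (-c) (-d))"

lemma Qp_neg: "Qp a b c d \<Longrightarrow> Qp (-a) (-b) (-c) (-d)"
  by (auto simp: Qp_def)

lemma Qp_id: "Qp 1 0 0 1"
proof -
  have "rho (eval_mat_m1 (mat 1)) = mk 1 0 0 1"
    by (simp add: rho_mk mk_eq mat_def)
  thus ?thesis using FB_one by (auto simp: Qp_def)
qed

lemma Qp_x: "Qp a b c d \<Longrightarrow> Qp a (b - a) c (d - c)"
proof -
  assume "Qp a b c d"
  then obtain A where A: "A \<in> formal_Burau" and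
    r: "rho (eval_mat_m1 A) = mk a b c d \<or> rho (eval_mat_m1 A) = mk (-a) (-b) (-c) (-d)"
    by (auto simp: Qp_def)
  have F: "A ** s1 \<in> formal_Burau" using FB_mult[OF A FB_gens(1)] .
  from r show ?thesis
  proof
    assume "rho (eval_mat_m1 A) = mk a b c d"
    thus ?thesis using rho_step(1)[OF A] F unfolding Qp_def by blast
  next
    assume "rho (eval_mat_m1 A) = mk (-a) (-b) (-c) (-d)"
    hence "rho (eval_mat_m1 (A ** s1)) = mk (-a) (-(b - a)) (-c) (-(d - c))"
      using rho_step(1)[OF A] by simp
    thus ?thesis using F unfolding Qp_def by blast
  qed
qed

lemma Qp_xi: "Qp a b c d \<Longrightarrow> Qp a (b + a) c (d + c)"
proof -
  assume "Qp a b c d"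
  then obtain A where A: "A \<in> formal_Burau" and
    r: "rho (eval_mat_m1 A) = mk a b c d \<or> rho (eval_mat_m1 A) = mk (-a) (-b) (-c) (-d)"
    by (auto simp: Qp_def)
  have F: "A ** s1i \<in> formal_Burau" using FB_mult[OF A FB_gens(3)] .
  from r show ?thesis
  proof
    assume "rho (eval_mat_m1 A) = mk a b c d"
    thus ?thesis using rho_step(2)[OF A] F unfolding Qp_def by blast
  next
    assume "rho (eval_mat_m1 A) = mk (-a) (-b) (-c) (-d)"
    hence "rho (eval_mat_m1 (A ** s1i)) = mk (-a) (-(b + a)) (-c) (-(d + c))"
      using rho_step(2)[OF A] by simp
    thus ?thesis using F unfolding Qp_def by blast
  qed
qed

lemma Qp_y: "Qp a b c d \<Longrightarrow> Qp (a + b) b (c + d) d"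
proof -
  assume "Qp a b c d"
  then obtain A where A: "A \<in> formal_Burau" and
    r: "rho (eval_mat_m1 A) = mk a b c d \<or> rho (eval_mat_m1 A) = mk (-a) (-b) (-c) (-d)"
    by (auto simp: Qp_def)
  have F: "A ** s2 \<in> formal_Burau" using FB_mult[OF A FB_gens(2)] .
  from r show ?thesis
  proof
    assume "rho (eval_mat_m1 A) = mk a b c d"
    thus ?thesis using rho_step(3)[OF A] F unfolding Qp_def by blast
  next
    assume "rho (eval_mat_m1 A) = mk (-a) (-b) (-c) (-d)"
    hence "rho (eval_mat_m1 (A ** s2)) = mk (-(a + b)) (-b) (-(c + d)) (-d)"
      using rho_step(3)[OF A] by simp
    thus ?thesis using F unfolding Qp_def by blast
  qed
qed

lemma Qp_yi: "Qp a b c d \<Longrightarrow> Qp (a - b) b (c - d) d"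
proof -
  assume "Qp a b c d"
  then obtain A where A: "A \<in> formal_Burau" and
    r: "rho (eval_mat_m1 A) = mk a b c d \<or> rho (eval_mat_m1 A) = mk (-a) (-b) (-c) (-d)"
    by (auto simp: Qp_def)
  have F: "A ** s2i \<in> formal_Burau" using FB_mult[OF A FB_gens(4)] .
  from r show ?thesis
  proof
    assume "rho (eval_mat_m1 A) = mk a b c d"
    thus ?thesis using rho_step(4)[OF A] F unfolding Qp_def by blast
  next
    assume "rho (eval_mat_m1 A) = mk (-a) (-b) (-c) (-d)"
    hence "rho (eval_mat_m1 (A ** s2i)) = mk (-(a - b)) (-b) (-(c - d)) (-d)"
      using rho_step(4)[OF A] by simp
    thus ?thesis using F unfolding Qp_def by blast
  qed
qed

lemma Qp_lower: "Qp 1 0 n 1"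
proof (induction n rule: int_induct[where k = 0])
  case base
  then show ?case by (rule Qp_id)
next
  case (step1 i)
  then show ?case using Qp_y[of 1 0 i 1] by simp
next
  case (step2 i)
  then show ?case using Qp_yi[of 1 0 i 1] by simp
qed

lemma Qp_b0:
  assumes "b = 0" "a * d - b * c = 1"
  shows "Qp a b c d"
proof -
  have "a * d = 1" using assms by simp
  hence "(a = 1 \<and> d = 1) \<or> (a = -1 \<and> d = -1)" by (simp add: zmult_eq_1_iff)
  thus ?thesis
  proof
    assume "a = 1 \<and> d = 1" thus ?thesis using Qp_lower[of c] assms by simp
  next
    assume "a = -1 \<and> d = -1" thus ?thesis using Qp_neg[OF Qp_lower[of "-c"]] assms by simp
  qed
qed

lemma Qp_a0:
  assumes "a = 0" "a * d - b * c = 1"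
  shows "Qp a b c d"
proof -
  have "Qp (-b) 0 (c - d) c" by (rule Qp_b0) (use assms in auto)
  hence "Qp (-b) (0 - -b) (c - d) (c - (c - d))" by (rule Qp_x)
  hence "Qp (-b) b (c - d) d" by simp
  hence "Qp (-b + b) b (c - d + d) d" by (rule Qp_y)
  thus ?thesis using assms by simp
qed

lemma Qp_all_aux:
  "\<forall>a b c d. nat (\<bar>a\<bar> + \<bar>b\<bar>) = n \<longrightarrow> a * d - b * c = 1 \<longrightarrow> Qp a b c d"
proof (induction n rule: less_induct)
  case (less n)
  show ?case
  proof (intro allI impI)
    fix a b c d :: int
    assume n: "nat (\<bar>a\<bar> + \<bar>b\<bar>) = n" and det: "a * d - b * c = 1"
    have IH: "\<And>a' b' c' d'. nat (\<bar>a'\<bar> + \<bar>b'\<bar>) < n \<Longrightarrow> a' * d' - b' * c' = 1 \<Longrightarrow> Qp a' b' c' d'"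
      using less by blast
    show "Qp a b c d"
    proof (cases "a = 0 \<or> b = 0")
      case True
      then show ?thesis using Qp_a0 Qp_b0 det by blast
    next
      case False
      hence a0: "a \<noteq> 0" and b0: "b \<noteq> 0" by auto
      consider "\<bar>b\<bar> \<le> \<bar>a\<bar>" "0 < a * b" | "\<bar>b\<bar> \<le> \<bar>a\<bar>" "a * b < 0"
        | "\<bar>a\<bar> < \<bar>b\<bar>" "0 < a * b" | "\<bar>a\<bar> < \<bar>b\<bar>" "a * b < 0"
        using a0 b0 by (metis linorder_neqE_linordered_idom mult_eq_0_iff not_le)
      then show ?thesis
      proof cases
        case 1
        have "Qp (a - b) b (c - d) d"
          by (rule IH) (use 1 a0 b0 n det in \<open>auto simp: zero_less_mult_iff algebra_simps\<close>)
        hence "Qp (a - b + b) b (c - d + d) d" by (rule Qp_y)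
        thus ?thesis by simp
      next
        case 2
        have "Qp (a + b) b (c + d) d"
          by (rule IH) (use 2 a0 b0 n det in \<open>auto simp: mult_less_0_iff algebra_simps\<close>)
        hence "Qp (a + b - b) b (c + d - d) d" by (rule Qp_yi)
        thus ?thesis by simp
      next
        case 3
        have "Qp a (b - a) c (d - c)"
          by (rule IH) (use 3 a0 b0 n det in \<open>auto simp: zero_less_mult_iff algebra_simps\<close>)
        hence "Qp a (b - a + a) c (d - c + c)" by (rule Qp_xi)
        thus ?thesis by simp
      next
        case 4
        have "Qp a (b + a) c (d + c)"
          by (rule IH) (use 4 a0 b0 n det in \<open>auto simp: mult_less_0_iff algebra_simps\<close>)
        hence "Qp a (b + a - a) c (d + c - c)" by (rule Qp_x)
        thus ?thesis by simp
      qed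
    qed
  qed
qed

lemma Qp_all: "a * d - b * c = 1 \<Longrightarrow> Qp a b c d"
  using Qp_all_aux by blast


lemma rho_det_alg:
  fixes b11 b12 b13 b21 b22 b23 b31 b32 b33 :: int
  assumes "b11 + b12 + b13 = 1" "b21 + b22 + b23 = 1" "b31 + b32 + b33 = 1"
    "- b11 + b21 - b31 = -1" "- b12 + b22 - b32 = 1" "- b13 + b23 - b33 = -1"
    "b11*b22*b33 + b12*b23*b31 + b13*b21*b32 - b11*b23*b32 - b12*b21*b33 - b13*b22*b31 = 1"
  shows "(1 - b13) * (1 - b31) - (1 - b11) * (1 - b33) = 1"
  using assms by algebra

lemma rho_in:
  assumes A: "A \<in> formal_Burau"
  shows "rho_bar A \<in> PSL2Z"
proof -
  have D: "det (rho (eval_mat_m1 A)) = 1"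
    using rho_det_alg[OF FB_evalB(1)[OF A, of 1] FB_evalB(1)[OF A, of 2] FB_evalB(1)[OF A, of 3]
        FB_evalB(2-4)[OF A] FB_detB[OF A, unfolded det_3]]
    by (simp add: det_2 rho_def)
  show ?thesis unfolding rho_bar_def PSL2Z_def
    by (rule image_eqI[where x = "rho (eval_mat_m1 A)"]) (simp_all add: D)
qed

lemma pgl_neg_gen: "pgl_class (\<chi> i j. - X $ i $ j) = pgl_class X"
proof -
  have e: "\<And>c. (\<chi> i j. c * (\<chi> i j. - X $ i $ j) $ i $ j) = (\<chi> i j. (- c) * X $ i $ j)"
    by (simp add: vec_eq_iff)
  show ?thesis
  proof (rule set_eqI, rule iffI)
    fix Y assume "Y \<in> pgl_class (\<chi> i j. - X $ i $ j)"
    then obtain c where "c \<noteq> 0" "Y = (\<chi> i j. c * (\<chi> i j. - X $ i $ j) $ i $ j)"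
      by (auto simp: pgl_class_def)
    hence "-c \<noteq> 0" "Y = (\<chi> i j. (- c) * X $ i $ j)" using e by auto
    thus "Y \<in> pgl_class X" unfolding pgl_class_def by blast
  next
    fix Y assume "Y \<in> pgl_class X"
    then obtain c where "c \<noteq> 0" "Y = (\<chi> i j. c * X $ i $ j)"
      by (auto simp: pgl_class_def)
    hence "-c \<noteq> 0" "Y = (\<chi> i j. (- c) * (\<chi> i j. - X $ i $ j) $ i $ j)" using e[of "-c"] by auto
    thus "Y \<in> pgl_class (\<chi> i j. - X $ i $ j)" unfolding pgl_class_def by blast
  qed
qed

lemma pgl_neg: "pgl_class (int_to_Qt_mat (mk (-a) (-b) (-c) (-d))) = pgl_class (int_to_Qt_mat (mk a b c d))"
proof -
  have "int_to_Qt_mat (mk (-a) (-b) (-c) (-d)) = (\<chi> i j. - int_to_Qt_mat (mk a b c d) $ i $ j)"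
    by (simp add: int_to_Qt_mat_def mk_def vec_eq_iff forall_2)
  thus ?thesis by (simp add: pgl_neg_gen)
qed

theorem lemma3p10:
  shows "(\<forall>A \<in> formal_Burau. \<exists>k::int. det A = neg_t_pow k)
         \<and> rho_bar ` formal_Burau = PSL2Z"
proof
  show "\<forall>A \<in> formal_Burau. \<exists>k::int. det A = neg_t_pow k" using part1 by blast
  show "rho_bar ` formal_Burau = PSL2Z"
  proof
    show "rho_bar ` formal_Burau \<subseteq> PSL2Z" using rho_in by blast
    show "PSL2Z \<subseteq> rho_bar ` formal_Burau"
    proof
      fix X assume "X \<in> PSL2Z"
      then obtain M :: "int^2^2" where M: "det M = 1" "X = pgl_class (int_to_Qt_mat M)"
        by (auto simp: PSL2Z_def)
      have Me: "M = mk (M$1$1) (M$1$2) (M$2$1) (M$2$2)" by (simp add: mk_def vec_eq_iff forall_2)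
      have "Qp (M$1$1) (M$1$2) (M$2$1) (M$2$2)"
        by (rule Qp_all) (use M(1) in \<open>simp add: det_2\<close>)
      then obtain A where A: "A \<in> formal_Burau" and
        r: "rho (eval_mat_m1 A) = mk (M$1$1) (M$1$2) (M$2$1) (M$2$2)
            \<or> rho (eval_mat_m1 A) = mk (-(M$1$1)) (-(M$1$2)) (-(M$2$1)) (-(M$2$2))"
        unfolding Qp_def by blast
      have "rho_bar A = X"
        using r
      proof
        assume "rho (eval_mat_m1 A) = mk (M$1$1) (M$1$2) (M$2$1) (M$2$2)"
        thus ?thesis using M(2) Me by (simp add: rho_bar_def)
      next
        assume "rho (eval_mat_m1 A) = mk (-(M$1$1)) (-(M$1$2)) (-(M$2$1)) (-(M$2$2))"
        hence "rho_bar A = pgl_class (int_to_Qt_mat (mk (M$1$1) (M$1$2) (M$2$1) (M$2$2)))"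
          by (simp add: rho_bar_def pgl_neg)
        thus ?thesis using M(2) Me by simp
      qed
      thus "X \<in> rho_bar ` formal_Burau" using A by blast
    qed
  qed
qed

end
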